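(* The morphism of algebraic patterns $\Xi^{\mathrm{op}}\colon\Theta^{\mathrm{op}}\to\Theta^{\mathrm{op}}$ is a strong Segal morphism: for every $T\in\Theta$ the induced functor $\Theta^{\mathrm{el}}_{/T}\to\Theta^{\mathrm{el}}_{/\Xi T}$ is final.
   Context: $\Theta$ is Joyal's cell category (strict $\omega$-categories free on globular sums); inert morphisms are those free on morphisms of $\omega$-graphs between globular sums, elementary objects are the globes $\mathbf D_n$, and $\Theta^{\mathrm{el}}_{/T}$ denotes the category of inert morphisms $E\to T$ in $\Theta$ with $E$ elementary. $\Xi$ is the suspension, with $\Xi\mathbf D_n=\mathbf D_{n+1}$. Every $T\in\Theta$ has a unique globular presentation $T\simeq\mathbf D_{n_1}\amalg_{\mathbf D_{m_1}}\cdots\amalg_{\mathbf D_{m_{p-1}}}\mathbf D_{n_p}$ with $m_i<n_i,n_{i+1}$, and the corresponding zigzag diagram is final in $\Theta^{\mathrm{el}}_{/T}$. *)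

theory Defs
  imports "HOL-Analysis.Analysis"
begin

text \<open>A cell of the globe D_n is (k, b): for k < n there are two k-cells, the
  iterated source (Src) and the iterated target (Tgt); the unique n-cell is (n, Top).\<close>

datatype gkind = Src | Tgt | Top

definition globe_cell :: "nat \<Rightarrow> nat \<times> gkind \<Rightarrow> bool" where
  "globe_cell n c \<longleftrightarrow> (fst c < n \<and> snd c \<noteq> Top) \<or> (fst c = n \<and> snd c = Top)"

text \<open>A globular sum is given by its globular presentation
  D_{n_1} \<amalg>_{D_{m_1}} ... \<amalg>_{D_{m_{p-1}}} D_{n_p}, encoded by the lists
  ns = [n_1,...,n_p] and ms = [m_1,...,m_{p-1}] with m_i < n_i, n_{i+1}.\<close>

definition glob_pres :: "nat list \<Rightarrow> nat list \<Rightarrow> bool" where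
  "glob_pres ns ms \<longleftrightarrow> ns \<noteq> [] \<and> length ns = Suc (length ms) \<and>
     (\<forall>i < length ms. ms ! i < ns ! i \<and> ms ! i < ns ! Suc i)"

type_synonym rawcell = "nat \<times> nat \<times> gkind"

text \<open>Cells of the disjoint union of the globes (i = index of the globe).\<close>

definition raw_cells :: "nat list \<Rightarrow> rawcell set" where
  "raw_cells ns = {(i, k, b). i < length ns \<and> globe_cell (ns ! i) (k, b)}"

text \<open>Gluing: the target copy of D_{m_i} in the i-th globe is identified with the
  source copy of D_{m_i} in the (i+1)-st globe.\<close>

definition glue :: "nat list \<Rightarrow> (rawcell \<times> rawcell) set" where
  "glue ms = {((i, k, b), (Suc i, k, b)) | i k b. i < length ms \<and> k < ms ! i \<and> b \<noteq> Top}
           \<union> {((i, ms ! i, Tgt), (Suc i, ms ! i, Src)) | i. i < length ms}"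

text \<open>The equivalence relation whose quotient is the colimit (computed levelwise).\<close>

definition cell_equiv :: "nat list \<Rightarrow> nat list \<Rightarrow> (rawcell \<times> rawcell) set" where
  "cell_equiv ns ms = (glue ms \<union> (glue ms)\<inverse>)\<^sup>* \<inter> (raw_cells ns \<times> raw_cells ns)"

definition gcells :: "nat list \<Rightarrow> nat list \<Rightarrow> rawcell set set" where
  "gcells ns ms = raw_cells ns // cell_equiv ns ms"

text \<open>This is the (poset) category
  Theta^el_{/T}: objects are the inert maps D_k \<rightarrow> T, i.e. k-cells of T, and a
  morphism is an inert D_k \<rightarrow> D_l over T (at most one, T being a pasting diagram).\<close>

definition face_step :: "nat list \<Rightarrow> nat list \<Rightarrow> (rawcell set \<times> rawcell set) set" where
  "face_step ns ms = {(X, Y). X \<in> gcells ns ms \<and> Y \<in> gcells ns ms \<and>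
      (\<exists>i k b k' b'. (i, k, b) \<in> X \<and> (i, k', b') \<in> Y \<and> k < k')}"

definition el_le :: "nat list \<Rightarrow> nat list \<Rightarrow> rawcell set \<Rightarrow> rawcell set \<Rightarrow> bool" where
  "el_le ns ms X Y \<longleftrightarrow> X \<in> gcells ns ms \<and> Y \<in> gcells ns ms \<and> (X, Y) \<in> (face_step ns ms)\<^sup>*"

text \<open>Xi D_n = D_{n+1} and Xi preserves globular sums, so Xi T has presentation
  with all n_i, m_i shifted by one. On cells, Xi sends a k-cell to a (k+1)-cell.\<close>

definition susp_pres :: "nat list \<Rightarrow> nat list" where
  "susp_pres xs = map Suc xs"

definition susp_raw :: "rawcell \<Rightarrow> rawcell" where
  "susp_raw c = (case c of (i, k, b) \<Rightarrow> (i, Suc k, b))"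

definition susp_el :: "nat list \<Rightarrow> nat list \<Rightarrow> rawcell set \<Rightarrow> rawcell set" where
  "susp_el ns ms X = cell_equiv (susp_pres ns) (susp_pres ms) `` (susp_raw ` X)"

text \<open>Classifying space of a finite poset P: geometric realization of its nerve,
  i.e. of its order complex, realized inside R^P.\<close>

definition poset_realization :: "'a set \<Rightarrow> ('a \<Rightarrow> 'a \<Rightarrow> bool) \<Rightarrow> ('a \<Rightarrow> real) topology" where
  "poset_realization P le = subtopology (powertop_real P)
     {f \<in> topspace (powertop_real P). (\<forall>x\<in>P. 0 \<le> f x) \<and> sum f P = 1 \<and>
        (\<forall>x\<in>P. \<forall>y\<in>P. f x \<noteq> 0 \<longrightarrow> f y \<noteq> 0 \<longrightarrow> le x y \<or> le y x)}"

definition weakly_contractible_poset :: "'a set \<Rightarrow> ('a \<Rightarrow> 'a \<Rightarrow> bool) \<Rightarrow> bool" where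
  "weakly_contractible_poset P le \<longleftrightarrow>
     finite P \<and> P \<noteq> {} \<and> contractible_space (poset_realization P le)"

text \<open>A functor F : P \<rightarrow> Q of finite posets is final iff for every y in Q the comma
  category y/F = {x. y \<le> F x} is weakly contractible.\<close>

definition final_poset_functor ::
  "'a set \<Rightarrow> ('a \<Rightarrow> 'a \<Rightarrow> bool) \<Rightarrow> 'b set \<Rightarrow> ('b \<Rightarrow> 'b \<Rightarrow> bool) \<Rightarrow> ('a \<Rightarrow> 'b) \<Rightarrow> bool" where
  "final_poset_functor P leP Q leQ F \<longleftrightarrow>
     (\<forall>y\<in>Q. weakly_contractible_poset {x \<in> P. leQ y (F x)} leP)"

end

theory Submission
  imports Defs
begin


definition cmp :: "('a \<Rightarrow> 'a \<Rightarrow> bool) \<Rightarrow> 'a \<Rightarrow> 'a \<Rightarrow> bool" where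
  "cmp le x y \<longleftrightarrow> le x y \<or> le y x"

definition Yset :: "'a set \<Rightarrow> ('a \<Rightarrow> 'a \<Rightarrow> bool) \<Rightarrow> 'a set \<Rightarrow> ('a \<Rightarrow> real) set" where
  "Yset P le S = {f \<in> topspace (powertop_real P). (\<forall>x\<in>P. 0 \<le> f x) \<and> sum f P = 1 \<and>
        (\<forall>x\<in>P. \<forall>y\<in>P. f x \<noteq> 0 \<longrightarrow> f y \<noteq> 0 \<longrightarrow> le x y \<or> le y x) \<and> (\<forall>x\<in>P-S. f x = 0)}"

definition Hm :: "'a \<Rightarrow> 'a \<Rightarrow> real \<times> ('a \<Rightarrow> real) \<Rightarrow> ('a \<Rightarrow> real)" where
  "Hm p q = (\<lambda>(t,f). \<lambda>x. if x = p then (1-t) * f p else if x = q then f q + t * f p else f x)"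

lemma Hm_cont:
  assumes "p \<in> P" "q \<in> P"
  shows "continuous_map (prod_topology (top_of_set {0..1}) (subtopology (powertop_real P) A)) (powertop_real P) (Hm p q)"
proof -
  let ?X = "prod_topology (top_of_set {0..1}) (subtopology (powertop_real P) A)"
  have pr: "continuous_map ?X euclideanreal (\<lambda>z. snd z x)" if "x \<in> P" for x
    by (rule continuous_map_compose[OF continuous_map_snd, unfolded o_def])
       (intro continuous_intros that)
  have fs: "continuous_map ?X euclideanreal fst"
    using continuous_map_fst continuous_map_in_subtopology by blast
  show ?thesis
    unfolding continuous_map_componentwise
  proof (intro conjI ballI)
    show "Hm p q ` topspace ?X \<subseteq> extensional P"
      using assms by (auto simp: Hm_def extensional_def PiE_def)
    fix x assume x: "x \<in> P"
    have e: "(\<lambda>z. Hm p q z x) = (if x = p then (\<lambda>z. (1 - fst z) * snd z p) else if x = q then (\<lambda>z. snd z q + fst z * snd z p) else (\<lambda>z. snd z x))"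
      by (auto simp: Hm_def fun_eq_iff split: prod.splits)
    show "continuous_map ?X euclideanreal (\<lambda>z. Hm p q z x)"
      unfolding e using pr[OF x] pr[OF assms(1)] pr[OF assms(2)] fs
      by (auto intro!: continuous_intros)
  qed
qed

lemma Hm0[simp]: "Hm p q (0,f) = f"
  by (auto simp: Hm_def)

lemma Hm_in:
  assumes P: "finite P" and refl: "\<forall>x\<in>P. le x x" and S: "S \<subseteq> P" and pq: "p \<in> S" "q \<in> S" "p \<noteq> q"
    and cpq: "cmp le p q" and dom: "\<forall>x\<in>S. cmp le x p \<longrightarrow> cmp le x q"
    and f: "f \<in> Yset P le S" and t: "t \<in> {0..1}"
  shows "Hm p q (t,f) \<in> Yset P le S" and "t = 1 \<Longrightarrow> Hm p q (t,f) \<in> Yset P le (S - {p})"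
proof -
  let ?g = "Hm p q (t,f)"
  have pP: "p \<in> P" "q \<in> P" using pq S by auto
  have ftop: "f \<in> topspace (powertop_real P)" and fnn: "\<forall>x\<in>P. 0 \<le> f x" and fs: "sum f P = 1"
    and fc: "\<forall>x\<in>P. \<forall>y\<in>P. f x \<noteq> 0 \<longrightarrow> f y \<noteq> 0 \<longrightarrow> le x y \<or> le y x" and fz: "\<forall>x\<in>P-S. f x = 0"
    using f by (auto simp: Yset_def)
  have gtop: "?g \<in> topspace (powertop_real P)"
    using ftop pP by (auto simp: Hm_def PiE_def extensional_def)
  have gnn: "\<forall>x\<in>P. 0 \<le> ?g x"
    using fnn t pP by (auto simp: Hm_def)
  have sg: "sum ?g P = sum f P"
  proof -
    have "sum ?g P = ?g p + (?g q + sum ?g (P - {p} - {q}))"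
      using P pP pq by (simp add: sum.remove[of P p] sum.remove[of "P - {p}" q])
    also have "sum ?g (P - {p} - {q}) = sum f (P - {p} - {q})"
      by (rule sum.cong) (auto simp: Hm_def)
    also have "sum f P = f p + (f q + sum f (P - {p} - {q}))"
      using P pP pq by (simp add: sum.remove[of P p] sum.remove[of "P - {p}" q])
    ultimately show ?thesis using pq by (simp add: Hm_def algebra_simps)
  qed
  have supp: "z \<in> S \<and> (f z \<noteq> 0 \<or> (z = q \<and> f p \<noteq> 0))" if "z \<in> P" "?g z \<noteq> 0" for z
    using that fz pq by (auto simp: Hm_def split: if_splits)
  have fS: "z \<in> S" if "z \<in> P" "f z \<noteq> 0" for z using that fz by auto
  have gc: "\<forall>x\<in>P. \<forall>y\<in>P. ?g x \<noteq> 0 \<longrightarrow> ?g y \<noteq> 0 \<longrightarrow> le x y \<or> le y x"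
  proof (intro ballI impI)
    fix x y assume xy: "x \<in> P" "y \<in> P" "?g x \<noteq> 0" "?g y \<noteq> 0"
    from supp[OF xy(1,3)] supp[OF xy(2,4)] show "le x y \<or> le y x"
    proof (elim conjE disjE)
      assume "f x \<noteq> 0" "f y \<noteq> 0" then show ?thesis using fc xy by auto
    next
      assume "x \<in> S" "f x \<noteq> 0" "y = q" "f p \<noteq> 0"
      then have "cmp le x p" using fc xy pP unfolding cmp_def by auto
      then show ?thesis using dom \<open>x \<in> S\<close> \<open>y = q\<close> unfolding cmp_def by auto
    next
      assume "y \<in> S" "f y \<noteq> 0" "x = q" "f p \<noteq> 0"
      then have "cmp le y p" using fc xy pP unfolding cmp_def by auto
      then show ?thesis using dom \<open>y \<in> S\<close> \<open>x = q\<close> unfolding cmp_def by auto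
    next
      assume "x = q" "y = q" then show ?thesis using refl pP by auto
    qed
  qed
  have gz: "\<forall>x\<in>P-S. ?g x = 0"
    using fz pq by (auto simp: Hm_def)
  show "?g \<in> Yset P le S"
    using gtop gnn sg fs gc gz by (simp add: Yset_def)
  assume "t = 1"
  then have "?g p = 0" by (simp add: Hm_def)
  then show "?g \<in> Yset P le (S - {p})"
    using gtop gnn sg fs gc gz by (auto simp: Yset_def)
qed


inductive dism :: "('a \<Rightarrow> 'a \<Rightarrow> bool) \<Rightarrow> 'a set \<Rightarrow> bool" for le where
  base: "dism le {m}"
| step: "dism le (S - {p}) \<Longrightarrow> p \<in> S \<Longrightarrow> q \<in> S \<Longrightarrow> p \<noteq> q \<Longrightarrow> cmp le p q \<Longrightarrow>
     (\<forall>x\<in>S. cmp le x p \<longrightarrow> cmp le x q) \<Longrightarrow> dism le S"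

abbreviation YT where "YT P le S \<equiv> subtopology (powertop_real P) (Yset P le S)"

lemma dism_hom:
  assumes P: "finite P" and refl: "\<forall>x\<in>P. le x x"
  shows "dism le S \<Longrightarrow> S \<subseteq> P \<Longrightarrow> \<exists>a. homotopic_with (\<lambda>_. True) (YT P le S) (YT P le S) id (\<lambda>_. a)"
proof (induction S rule: dism.induct)
  case (base m)
  define d :: "'a \<Rightarrow> real" where "d = (\<lambda>x. if x \<in> P then (if x = m then 1 else 0) else undefined)"
  have "f = d" if "f \<in> Yset P le {m}" for f
  proof -
    have ftop: "f \<in> topspace (powertop_real P)" and fs: "sum f P = 1" and fz: "\<forall>x\<in>P-{m}. f x = 0"
      using that by (auto simp: Yset_def)
    have "sum f P = f m + sum f (P - {m})" using base P by (simp add: sum.remove)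
    also have "sum f (P - {m}) = 0" using fz by simp
    finally have "f m = 1" using fs by simp
    then show ?thesis using ftop fz by (auto simp: d_def fun_eq_iff PiE_def extensional_def)
  qed
  then have "\<forall>f\<in>topspace (YT P le {m}). id f = d" by (simp add: topspace_subtopology)
  then have "homotopic_with (\<lambda>_. True) (YT P le {m}) (YT P le {m}) id (\<lambda>_. d)"
    by (intro homotopic_with_equal) auto
  then show ?case by blast
next
  case (step S p q)
  have pq: "p \<in> S" "q \<in> S" "p \<noteq> q" using step by auto
  obtain a where IH: "homotopic_with (\<lambda>_. True) (YT P le (S - {p})) (YT P le (S - {p})) id (\<lambda>_. a)"
    using step.IH step.prems by blast
  let ?r = "\<lambda>f. Hm p q (1, f)"
  have inS: "Hm p q (t,f) \<in> Yset P le S" if "f \<in> Yset P le S" "t \<in> {0..1}" for t f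
    using Hm_in(1)[OF P refl step.prems pq step.hyps(5) step.hyps(6) that] .
  have inS': "?r f \<in> Yset P le (S - {p})" if "f \<in> Yset P le S" for f
    using Hm_in(2)[OF P refl step.prems pq step.hyps(5) step.hyps(6) that, of 1] by simp
  have pP: "p \<in> P" "q \<in> P" using pq step.prems by auto
  have HC: "continuous_map (prod_topology (top_of_set {0..1}) (YT P le S)) (YT P le S) (Hm p q)"
    by (rule continuous_map_into_subtopology[OF Hm_cont[OF pP]]) (use inS in \<open>auto simp: topspace_subtopology\<close>)
  have h1: "homotopic_with (\<lambda>_. True) (YT P le S) (YT P le S) id ?r"
    unfolding homotopic_with_def
    by (intro exI[of _ "Hm p q"] conjI HC) auto
  have pc: "continuous_map (YT P le S) (prod_topology (top_of_set {0..1}) (YT P le S)) (\<lambda>f. (1::real, f))"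
    by (intro continuous_map_pairedI) auto
  have rc: "continuous_map (YT P le S) (YT P le (S - {p})) ?r"
  proof -
    have "continuous_map (YT P le S) (powertop_real P) ?r"
      using continuous_map_compose[OF pc Hm_cont[OF pP, of "Yset P le S"]]
      by (simp add: o_def)
    moreover have "?r \<in> topspace (YT P le S) \<rightarrow> Yset P le (S - {p})"
      using inS' by (auto simp: topspace_subtopology)
    ultimately show ?thesis
      by (rule continuous_map_into_subtopology)
  qed
  have h2: "homotopic_with (\<lambda>_. True) (YT P le S) (YT P le (S - {p})) (id \<circ> ?r) ((\<lambda>_. a) \<circ> ?r)"
    by (rule homotopic_with_compose_continuous_map_right[OF IH rc]) auto
  have sub: "Yset P le (S - {p}) \<subseteq> Yset P le S" by (auto simp: Yset_def)
  have ic: "continuous_map (YT P le (S - {p})) (YT P le S) id"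
  proof -
    have "YT P le (S - {p}) = subtopology (YT P le S) (Yset P le (S - {p}))"
      using sub by (simp add: subtopology_subtopology Int_absorb1)
    then show ?thesis by (simp add: continuous_map_from_subtopology)
  qed
  have h3: "homotopic_with (\<lambda>_. True) (YT P le S) (YT P le S) (id \<circ> (id \<circ> ?r)) (id \<circ> ((\<lambda>_. a) \<circ> ?r))"
    by (rule homotopic_with_compose_continuous_map_left[OF h2 ic]) auto
  have "homotopic_with (\<lambda>_. True) (YT P le S) (YT P le S) id (\<lambda>_. a)"
  proof -
    have e1: "id \<circ> (id \<circ> ?r) = ?r" and e2: "id \<circ> ((\<lambda>_. a) \<circ> ?r) = (\<lambda>_. a)" by (auto simp: fun_eq_iff)
    show ?thesis using homotopic_with_trans[OF h1 h3[unfolded e1 e2]] .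
  qed
  then show ?case by blast
qed

lemma dism_contractible:
  assumes "finite P" "\<forall>x\<in>P. le x x" "dism le P"
  shows "weakly_contractible_poset P le"
proof -
  have "P \<noteq> {}" using assms(3) by (cases rule: dism.cases) auto
  moreover have "poset_realization P le = YT P le P"
    unfolding poset_realization_def Yset_def by simp
  ultimately show ?thesis
    using dism_hom[OF assms(1,2,3)] assms(1)
    unfolding weakly_contractible_poset_def contractible_space_def by auto
qed

lemma dism_add:
  assumes "finite R" "dism le S0" "q \<in> S0" "S0 \<inter> R = {}"
    and "\<And>p. p \<in> R \<Longrightarrow> cmp le p q \<and> (\<forall>x\<in>S0 \<union> R. cmp le x p \<longrightarrow> cmp le x q)"
  shows "dism le (S0 \<union> R)"
  using assms(1,4,5)
proof (induction R rule: finite_induct)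
  case empty then show ?case using assms(2) by simp
next
  case (insert p R)
  have "dism le (S0 \<union> R)"
  proof (rule insert.IH)
    show "S0 \<inter> R = {}" using insert.prems(1) by blast
    fix p' assume "p' \<in> R"
    then have "p' \<in> insert p R" by blast
    from insert.prems(2)[OF this] show "cmp le p' q \<and> (\<forall>x\<in>S0 \<union> R. cmp le x p' \<longrightarrow> cmp le x q)"
      by blast
  qed
  moreover have "S0 \<union> insert p R - {p} = S0 \<union> R" using insert.hyps(2) insert.prems(1) by blast
  moreover have "p \<noteq> q" using insert.prems(1) assms(3) by blast
  moreover have "cmp le p q \<and> (\<forall>x\<in>S0 \<union> insert p R. cmp le x p \<longrightarrow> cmp le x q)"
    using insert.prems(2) by blast
  ultimately show ?case using assms(3)
    using dism.step[of le "S0 \<union> insert p R" p q] by simp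
qed

lemma dism_cone:
  assumes "finite S" "m \<in> S" "\<forall>x\<in>S. cmp le x m"
  shows "dism le S"
proof -
  have "dism le ({m} \<union> (S - {m}))"
    by (rule dism_add) (use assms in \<open>auto intro: dism.base simp: cmp_def\<close>)
  moreover have "{m} \<union> (S - {m}) = S" using assms by auto
  ultimately show ?thesis by simp
qed



definition lb :: "nat list \<Rightarrow> nat \<Rightarrow> nat \<Rightarrow> gkind \<Rightarrow> bool" where
  "lb ms i k b \<longleftrightarrow> i < length ms \<and> ((k < ms ! i \<and> b \<noteq> Top) \<or> (k = ms ! i \<and> b = Src))"

fun can :: "nat list \<Rightarrow> rawcell \<Rightarrow> rawcell" where
  "can ms (0, k, b) = (0, k, b)"
| "can ms (Suc i, k, b) = (if lb ms i k b then can ms (i, k, if k = ms ! i then Tgt else b) else (Suc i, k, b))"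

lemma can_dim: "fst (snd (can ms c)) = fst (snd c)"
  by (induction ms c rule: can.induct) auto

lemma can_idx: "fst (can ms c) \<le> fst c"
  by (induction ms c rule: can.induct) (auto simp: le_Suc_eq)

lemma can_Top: "snd (snd c) = Top \<Longrightarrow> can ms c = c"
  by (induction ms c rule: can.induct) (auto simp: lb_def)

lemma can_notTop: "snd (snd c) \<noteq> Top \<Longrightarrow> snd (snd (can ms c)) \<noteq> Top"
  by (induction ms c rule: can.induct) auto

lemma can_fix: "\<not> lb ms i k b \<Longrightarrow> can ms (Suc i, k, b) = (Suc i, k, b)"
  by simp

lemma can_face: "l < fst (snd c) \<Longrightarrow> e \<noteq> Top \<Longrightarrow> can ms (fst c, l, e) = can ms (fst (can ms c), l, e)"
proof (induction ms c rule: can.induct)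
  case (1 ms k b) then show ?case by simp
next
  case (2 ms i k b)
  show ?case
  proof (cases "lb ms i k b")
    case True
    then have "l < ms ! i" "lb ms i l e" using 2(2,3) by (auto simp: lb_def)
    then have "can ms (Suc i, l, e) = can ms (i, l, e)" by simp
    then show ?thesis using 2 True by simp
  next
    case False then show ?thesis by simp
  qed
qed

lemma glue_can: "(c, d) \<in> glue ms \<Longrightarrow> can ms c = can ms d"
  by (auto simp: glue_def lb_def)

lemma rel_can: "(c, d) \<in> (glue ms \<union> (glue ms)\<inverse>)\<^sup>* \<Longrightarrow> can ms c = can ms d"
proof (induction rule: rtrancl_induct)
  case (step y z)
  then have "can ms y = can ms z" using glue_can[of y z ms] glue_can[of z y ms] by (metis UnE converse_iff)
  then show ?case using step by simp
qed simp

lemma can_rel: "(c, can ms c) \<in> (glue ms \<union> (glue ms)\<inverse>)\<^sup>*"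
proof (induction ms c rule: can.induct)
  case (1 ms k b) then show ?case by simp
next
  case (2 ms i k b)
  show ?case
  proof (cases "lb ms i k b")
    case True
    let ?b = "if k = ms ! i then Tgt else b"
    have "((i, k, ?b), (Suc i, k, b)) \<in> glue ms"
      using True by (auto simp: glue_def lb_def)
    then have "((Suc i, k, b), (i, k, ?b)) \<in> (glue ms \<union> (glue ms)\<inverse>)\<^sup>*" by blast
    moreover have "((i, k, ?b), can ms (i, k, ?b)) \<in> (glue ms \<union> (glue ms)\<inverse>)\<^sup>*"
      using 2(1) True .
    ultimately show ?thesis using True by (metis can.simps(2) rtrancl_trans)
  next
    case False then show ?thesis by simp
  qed
qed

lemma rel_sym: "(x, y) \<in> (r \<union> r\<inverse>)\<^sup>* \<Longrightarrow> (y, x) \<in> (r \<union> r\<inverse>)\<^sup>*"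
  by (metis converse_Un converse_converse rtrancl_converseI sup_commute)

lemma rel_iff_can: "(c, d) \<in> (glue ms \<union> (glue ms)\<inverse>)\<^sup>* \<longleftrightarrow> can ms c = can ms d"
proof
  assume "can ms c = can ms d"
  moreover have "(can ms d, d) \<in> (glue ms \<union> (glue ms)\<inverse>)\<^sup>*"
    using rel_sym[OF can_rel[of d ms]] .
  ultimately show "(c, d) \<in> (glue ms \<union> (glue ms)\<inverse>)\<^sup>*" using can_rel[of c ms] by (metis rtrancl_trans)
qed (rule rel_can)

lemma cell_equiv_can: "cell_equiv ns ms = {(c, d). c \<in> raw_cells ns \<and> d \<in> raw_cells ns \<and> can ms c = can ms d}"
  unfolding cell_equiv_def by (auto simp: rel_iff_can)

definition cls :: "nat list \<Rightarrow> nat list \<Rightarrow> rawcell \<Rightarrow> rawcell set" where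
  "cls ns ms c = {d \<in> raw_cells ns. can ms d = can ms c}"

lemma gcells_cls: "gcells ns ms = cls ns ms ` raw_cells ns"
proof -
  have "cell_equiv ns ms `` {c} = cls ns ms c" if "c \<in> raw_cells ns" for c
    using that unfolding cell_equiv_can cls_def by auto
  then show ?thesis unfolding gcells_def quotient_def by auto
qed

lemma raw_iff: "(i, k, b) \<in> raw_cells ns \<longleftrightarrow> i < length ns \<and> globe_cell (ns ! i) (k, b)"
  by (simp add: raw_cells_def)

lemma cls_mem: "c \<in> raw_cells ns \<Longrightarrow> c \<in> cls ns ms c"
  by (simp add: cls_def)

lemma cls_eq: "d \<in> cls ns ms c \<Longrightarrow> cls ns ms d = cls ns ms c"
  by (auto simp: cls_def)

lemma finite_raw: "finite (raw_cells ns)"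
proof -
  have "raw_cells ns \<subseteq> {..<length ns} \<times> {..Max (set ns)} \<times> UNIV"
    by (auto simp: raw_cells_def globe_cell_def) (metis Max_ge finite_set le_trans less_imp_le nth_mem)+
  moreover have "finite (UNIV :: gkind set)"
  proof -
    have "(UNIV :: gkind set) = {Src, Tgt, Top}" using gkind.exhaust by auto
    then show ?thesis by (metis finite.emptyI finite_insert)
  qed
  ultimately show ?thesis by (meson finite_SigmaI finite_atMost finite_lessThan finite_subset)
qed

lemma finite_gcells: "finite (gcells ns ms)"
  by (simp add: gcells_cls finite_raw)


abbreviation fs where "fs ns ms X Y \<equiv> (X, Y) \<in> face_step ns ms"

lemma gcells_rep: "X \<in> gcells ns ms \<Longrightarrow> c \<in> X \<Longrightarrow> X = cls ns ms c"
  by (auto simp: gcells_cls cls_def)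

lemma mem_cls: "d \<in> cls ns ms c \<longleftrightarrow> d \<in> raw_cells ns \<and> can ms d = can ms c"
  by (simp add: cls_def)

lemma gcells_sub: "X \<in> gcells ns ms \<Longrightarrow> X \<subseteq> raw_cells ns"
  by (auto simp: gcells_cls cls_def)

lemma gcells_ne: "X \<in> gcells ns ms \<Longrightarrow> \<exists>c. c \<in> X"
  by (auto simp: gcells_cls cls_def)

lemma gcells_share: "X \<in> gcells ns ms \<Longrightarrow> Y \<in> gcells ns ms \<Longrightarrow> c \<in> X \<Longrightarrow> c \<in> Y \<Longrightarrow> X = Y"
  using gcells_rep by metis

lemma gcells_dim: "X \<in> gcells ns ms \<Longrightarrow> (i, k, b) \<in> X \<Longrightarrow> (i', k', b') \<in> X \<Longrightarrow> k = k'"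
  using can_dim[of ms "(i,k,b)"] can_dim[of ms "(i',k',b')"]
  by (auto simp: gcells_cls cls_def)

lemma raw_notTop: "(i, l, e) \<in> raw_cells ns \<Longrightarrow> (i, k, b) \<in> raw_cells ns \<Longrightarrow> l < k \<Longrightarrow> e \<noteq> Top"
  by (auto simp: raw_cells_def globe_cell_def)

lemma fs_any:
  assumes fs: "fs ns ms X Y" and y: "(j, k', b') \<in> Y"
  shows "\<exists>l e. l < k' \<and> (j, l, e) \<in> X"
proof -
  obtain i l e k0 b0 where a: "(i, l, e) \<in> X" "(i, k0, b0) \<in> Y" "l < k0" and XY: "X \<in> gcells ns ms" "Y \<in> gcells ns ms"
    using fs unfolding face_step_def by blast
  have r: "(i, l, e) \<in> raw_cells ns" "(i, k0, b0) \<in> raw_cells ns" "(j, k', b') \<in> raw_cells ns"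
    using a y XY gcells_sub by blast+
  have k: "k0 = k'" using gcells_dim[OF XY(2) a(2) y] .
  have cY: "can ms (i, k0, b0) = can ms (j, k', b')"
    using gcells_rep[OF XY(2) a(2)] y by (simp add: mem_cls)
  have e: "e \<noteq> Top" using raw_notTop[OF r(1) r(2) a(3)] .
  have "can ms (i, l, e) = can ms (fst (can ms (i, k0, b0)), l, e)"
    using can_face[of l "(i,k0,b0)" e ms] a(3) e by simp
  also have "\<dots> = can ms (j, l, e)"
    using can_face[of l "(j,k',b')" e ms] a(3) e k cY by simp
  finally have ce: "can ms (j, l, e) = can ms (i, l, e)" by simp
  have "(j, l, e) \<in> raw_cells ns"
    using r(3) a(3) k e by (auto simp: raw_cells_def globe_cell_def)
  then have "(j, l, e) \<in> X"
    using gcells_rep[OF XY(1) a(1)] ce by (simp add: mem_cls)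
  then show ?thesis using a(3) k by blast
qed

lemma fs_trans: "fs ns ms X Y \<Longrightarrow> fs ns ms Y Z \<Longrightarrow> fs ns ms X Z"
proof -
  assume 1: "fs ns ms X Y" and 2: "fs ns ms Y Z"
  obtain i k b k' b' where a: "(i, k, b) \<in> Y" "(i, k', b') \<in> Z" "k < k'" and g: "Z \<in> gcells ns ms"
    using 2 unfolding face_step_def by blast
  obtain l e where "l < k" "(i, l, e) \<in> X" using fs_any[OF 1 a(1)] by blast
  moreover have "X \<in> gcells ns ms" using 1 unfolding face_step_def by blast
  ultimately show ?thesis using a g unfolding face_step_def
    by (smt (verit) CollectI case_prodI less_trans)
qed

lemma el_le_iff: "el_le ns ms X Y \<longleftrightarrow> X \<in> gcells ns ms \<and> Y \<in> gcells ns ms \<and> (X = Y \<or> fs ns ms X Y)"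
proof -
  have tr: "trans (face_step ns ms)"
    by (rule transI) (use fs_trans in \<open>auto simp: face_step_def\<close>)
  show ?thesis
    unfolding el_le_def rtrancl_eq_or_trancl trancl_id[OF tr] by (auto simp: face_step_def)
qed

lemma face_stepI: "X \<in> gcells ns ms \<Longrightarrow> Y \<in> gcells ns ms \<Longrightarrow> (i, l, e) \<in> X \<Longrightarrow> (i, k, b) \<in> Y \<Longrightarrow> l < k \<Longrightarrow> fs ns ms X Y"
  unfolding face_step_def by blast



definition Sj :: "nat list \<Rightarrow> nat list \<Rightarrow> nat \<Rightarrow> rawcell set set" where
  "Sj ns ms j = {X \<in> gcells ns ms. \<exists>c\<in>X. fst c \<le> j}"

definition Tp :: "nat list \<Rightarrow> nat list \<Rightarrow> nat \<Rightarrow> rawcell set" where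
  "Tp ns ms j = cls ns ms (j, ns ! j, Top)"

lemma Tp_eq: "j < length ns \<Longrightarrow> Tp ns ms j = {(j, ns ! j, Top)}"
proof -
  assume j: "j < length ns"
  have "d = (j, ns ! j, Top)" if "can ms d = can ms (j, ns ! j, Top)" for d
  proof -
    have ct: "can ms (j, ns ! j, Top) = (j, ns ! j, Top)" by (simp add: can_Top)
    show ?thesis
    proof (cases "snd (snd d) = Top")
      case True then show ?thesis using that ct can_Top[of d ms] by simp
    next
      case False then show ?thesis using that ct can_notTop[of d ms] by simp
    qed
  qed
  moreover have "(j, ns ! j, Top) \<in> raw_cells ns" using j by (simp add: raw_cells_def globe_cell_def)
  ultimately show ?thesis unfolding Tp_def cls_def by auto
qed

lemma Tp_in: "j < length ns \<Longrightarrow> Tp ns ms j \<in> gcells ns ms"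
  unfolding Tp_def gcells_cls by (rule imageI) (simp add: raw_cells_def globe_cell_def)

lemma el_refl: "X \<in> gcells ns ms \<Longrightarrow> el_le ns ms X X"
  by (simp add: el_le_iff)

lemma below_Tp:
  assumes "X \<in> gcells ns ms" "(j, k, b) \<in> X"
  shows "el_le ns ms X (Tp ns ms j)"
proof -
  have r: "(j, k, b) \<in> raw_cells ns" using assms gcells_sub by blast
  then have j: "j < length ns" by (simp add: raw_cells_def)
  show ?thesis
  proof (cases "k < ns ! j")
    case True
    have "fs ns ms X (Tp ns ms j)"
      by (rule face_stepI[OF assms(1) Tp_in[OF j] assms(2), of "ns ! j" Top]) (use j True Tp_eq in auto)
    then show ?thesis using assms(1) Tp_in[OF j] by (simp add: el_le_iff)
  next
    case False
    then have "k = ns ! j" "b = Top" using r by (auto simp: raw_cells_def globe_cell_def)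
    then have "X = Tp ns ms j" using gcells_rep[OF assms] by (simp add: Tp_def)
    then show ?thesis using el_refl assms(1) by simp
  qed
qed

lemma dism_S0:
  assumes "glob_pres ns ms"
  shows "dism (el_le ns ms) (Sj ns ms 0)"
proof (rule dism_cone)
  have l: "0 < length ns" using assms by (simp add: glob_pres_def)
  show "finite (Sj ns ms 0)" using finite_gcells[of ns ms] by (simp add: Sj_def)
  show "Tp ns ms 0 \<in> Sj ns ms 0" using Tp_in[OF l] Tp_eq[OF l] by (auto simp: Sj_def)
  show "\<forall>x\<in>Sj ns ms 0. cmp (el_le ns ms) x (Tp ns ms 0)"
    unfolding Sj_def cmp_def using below_Tp by fastforce
qed


lemma dism_Suc:
  assumes gp: "glob_pres ns ms" and j: "Suc j < length ns" and IH: "dism (el_le ns ms) (Sj ns ms j)"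
  shows "dism (el_le ns ms) (Sj ns ms (Suc j))"
proof -
  let ?le = "el_le ns ms"
  let ?T = "Tp ns ms (Suc j)"
  let ?m = "ms ! j"
  let ?Q = "cls ns ms (j, ?m, Tgt)"
  have jm: "j < length ms" and m: "?m < ns ! j" "?m < ns ! Suc j" using gp j by (auto simp: glob_pres_def)
  have j0: "j < length ns" using j by simp
  have Qr: "(j, ?m, Tgt) \<in> raw_cells ns" using m j0 by (simp add: raw_cells_def globe_cell_def)
  have Qin: "?Q \<in> gcells ns ms" using Qr by (simp add: gcells_cls)
  have QSj: "?Q \<in> Sj ns ms j" using Qin cls_mem[OF Qr] by (force simp: Sj_def)
  have QS: "(Suc j, ?m, Src) \<in> ?Q"
    using m j jm by (simp add: mem_cls raw_cells_def globe_cell_def lb_def)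
  have Tin: "?T \<in> gcells ns ms" using Tp_in[OF j] .
  have Teq: "?T = {(Suc j, ns ! Suc j, Top)}" using Tp_eq[OF j] .
  have Tnot: "?T \<notin> Sj ns ms j" using Teq by (auto simp: Sj_def)
  have TQ: "fs ns ms ?Q ?T"
    by (rule face_stepI[OF Qin Tin QS, of "ns ! Suc j" Top]) (use Teq m in auto)
  have cTQ: "cmp ?le ?T ?Q" using TQ Qin Tin by (simp add: cmp_def el_le_iff)
  have dom: "cmp ?le x ?Q" if x: "x \<in> Sj ns ms j \<union> {?T}" and cx: "cmp ?le x ?T" for x
  proof (cases "x = ?T")
    case True then show ?thesis using cTQ by simp
  next
    case False
    then have xS: "x \<in> Sj ns ms j" using x by simp
    then obtain i k b where c: "(i, k, b) \<in> x" "i \<le> j" and xg: "x \<in> gcells ns ms" by (auto simp: Sj_def)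
    have "fs ns ms x ?T \<or> fs ns ms ?T x" using cx False by (auto simp: cmp_def el_le_iff)
    moreover have "\<not> fs ns ms ?T x"
    proof
      assume "fs ns ms ?T x"
      from fs_any[OF this c(1)] obtain l e where "(i, l, e) \<in> ?T" by blast
      then show False using Teq c(2) by simp
    qed
    ultimately have "fs ns ms x ?T" by simp
    from fs_any[OF this] Teq obtain l e where le: "l < ns ! Suc j" "(Suc j, l, e) \<in> x" by auto
    have lk: "l = k" using gcells_dim[OF xg le(2) c(1)] .
    have ceq: "can ms (Suc j, l, e) = can ms (i, k, b)"
      using gcells_rep[OF xg c(1)] le(2) by (simp add: mem_cls)
    have "lb ms j l e"
    proof (rule ccontr)
      assume "\<not> lb ms j l e"
      then have "can ms (Suc j, l, e) = (Suc j, l, e)" by simp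
      then have "fst (can ms (i, k, b)) = Suc j" using ceq by (metis fst_conv)
      then show False using can_idx[of ms "(i,k,b)"] c(2) by simp
    qed
    then have "(l < ?m \<and> e \<noteq> Top) \<or> (l = ?m \<and> e = Src)" by (simp add: lb_def)
    then show ?thesis
    proof
      assume "l < ?m \<and> e \<noteq> Top"
      then have "fs ns ms x ?Q" using face_stepI[OF xg Qin le(2) QS] by simp
      then show ?thesis using xg Qin by (simp add: cmp_def el_le_iff)
    next
      assume "l = ?m \<and> e = Src"
      then have "x = ?Q" using gcells_share[OF xg Qin le(2)] QS by simp
      then show ?thesis using el_refl[OF Qin] by (simp add: cmp_def)
    qed
  qed
  have A: "dism ?le (Sj ns ms j \<union> {?T})"
  proof (rule dism.step[of ?le "Sj ns ms j \<union> {?T}" ?T ?Q])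
    show "dism ?le (Sj ns ms j \<union> {?T} - {?T})" using IH Tnot by (simp add: insert_absorb)
    show "?T \<noteq> ?Q" using Tnot QSj by auto
  qed (use QSj cTQ dom in auto)
  define R where "R = Sj ns ms (Suc j) - (Sj ns ms j \<union> {?T})"
  have SS: "Sj ns ms (Suc j) = (Sj ns ms j \<union> {?T}) \<union> R"
  proof -
    have "Sj ns ms j \<subseteq> Sj ns ms (Suc j)" unfolding Sj_def by (force simp: le_Suc_eq)
    moreover have "?T \<in> Sj ns ms (Suc j)" using Tin Teq by (auto simp: Sj_def)
    ultimately show ?thesis unfolding R_def by blast
  qed
  have B: "dism ?le ((Sj ns ms j \<union> {?T}) \<union> R)"
  proof (rule dism_add[OF _ A])
    show "finite R" unfolding R_def Sj_def using finite_gcells[of ns ms] by simp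
    show "?T \<in> Sj ns ms j \<union> {?T}" by simp
    show "(Sj ns ms j \<union> {?T}) \<inter> R = {}" unfolding R_def by blast
    fix p assume pR: "p \<in> R"
    then have pg: "p \<in> gcells ns ms" and pc: "\<exists>c\<in>p. fst c \<le> Suc j" and pn: "\<forall>c\<in>p. \<not> fst c \<le> j"
      and pT: "p \<noteq> ?T"
      unfolding R_def Sj_def by auto
    obtain l e where le: "(Suc j, l, e) \<in> p" using pc pn by (metis le_SucE prod.collapse)
    have pge: "\<And>i k b. (i, k, b) \<in> p \<Longrightarrow> i = Suc j \<or> i > Suc j" using pn by fastforce
    have pT': "?le p ?T" using below_Tp[OF pg le] .
    show "cmp ?le p ?T \<and> (\<forall>x\<in>Sj ns ms j \<union> {?T} \<union> R. cmp ?le x p \<longrightarrow> cmp ?le x ?T)"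
    proof (intro conjI ballI impI)
      show "cmp ?le p ?T" using pT' by (simp add: cmp_def)
      fix x assume x: "x \<in> Sj ns ms j \<union> {?T} \<union> R" and cx: "cmp ?le x p"
      then have xS: "x \<in> Sj ns ms (Suc j)" using SS by blast
      then obtain i k b where c: "(i, k, b) \<in> x" "i \<le> Suc j" and xg: "x \<in> gcells ns ms" by (auto simp: Sj_def)
      have "x = p \<or> fs ns ms x p \<or> fs ns ms p x" using cx by (auto simp: cmp_def el_le_iff)
      then show "cmp ?le x ?T"
      proof (elim disjE)
        assume "x = p" then show ?thesis using pT' by (simp add: cmp_def)
      next
        assume "fs ns ms x p"
        from fs_any[OF this le] obtain l' e' where "(Suc j, l', e') \<in> x" by blast
        from below_Tp[OF xg this] show ?thesis by (simp add: cmp_def)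
      next
        assume "fs ns ms p x"
        from fs_any[OF this c(1)] obtain l' e' where "(i, l', e') \<in> p" by blast
        then have "i = Suc j" using pge c(2) by fastforce
        from below_Tp[OF xg c(1)[unfolded this]] show ?thesis by (simp add: cmp_def)
      qed
    qed
  qed
  show ?thesis using B SS by simp
qed

lemma dism_all:
  assumes gp: "glob_pres ns ms"
  shows "j < length ns \<Longrightarrow> dism (el_le ns ms) (Sj ns ms j)"
proof (induction j)
  case 0 then show ?case using dism_S0[OF gp] by simp
next
  case (Suc j) then show ?case using dism_Suc[OF gp] by simp
qed

lemma gcells_contractible:
  assumes gp: "glob_pres ns ms"
  shows "weakly_contractible_poset (gcells ns ms) (el_le ns ms)"
proof -
  have l: "length ns - 1 < length ns" using gp by (simp add: glob_pres_def)
  have "Sj ns ms (length ns - 1) = gcells ns ms"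
  proof -
    have "\<exists>c\<in>X. fst c \<le> length ns - 1" if XG: "X \<in> gcells ns ms" for X
    proof -
      obtain c where "c \<in> X" using gcells_ne[OF XG] by blast
      moreover then have "c \<in> raw_cells ns" using gcells_sub[OF XG] by blast
      ultimately show ?thesis by (force simp: raw_cells_def)
    qed
    then show ?thesis by (auto simp: Sj_def)
  qed
  then show ?thesis
    using dism_contractible[OF finite_gcells] dism_all[OF gp l] el_refl by metis
qed



lemma gp_susp: "glob_pres ns ms \<Longrightarrow> glob_pres (susp_pres ns) (susp_pres ms)"
  by (auto simp: glob_pres_def susp_pres_def nth_Cons' split: nat.splits)

lemma lb_Suc: "lb (map Suc ms) i (Suc k) b = lb ms i k b"
  by (auto simp: lb_def)

lemma can_susp: "can (map Suc ms) (i, Suc k, b) = susp_raw (can ms (i, k, b))"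
proof (induction i arbitrary: k b)
  case 0 then show ?case by (simp add: susp_raw_def)
next
  case (Suc i)
  show ?case
  proof (cases "lb ms i k b")
    case True
    then have "i < length ms" by (simp add: lb_def)
    then show ?thesis using True Suc lb_Suc[of ms i k b] by simp
  next
    case False
    then show ?thesis using lb_Suc[of ms i k b] by (simp add: susp_raw_def)
  qed
qed

lemma can_zero: "b \<noteq> Top \<Longrightarrow> i \<le> length ms \<Longrightarrow> can (map Suc ms) (i, 0, b) = (0, 0, b)"
proof (induction i)
  case 0 then show ?case by simp
next
  case (Suc i)
  then have "lb (map Suc ms) i 0 b" by (simp add: lb_def)
  then show ?case using Suc by simp
qed

lemma raw_susp_Suc: "(i, Suc k, b) \<in> raw_cells (susp_pres ns) \<longleftrightarrow> (i, k, b) \<in> raw_cells ns"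
  by (auto simp: raw_cells_def susp_pres_def globe_cell_def)

lemma raw_susp_0: "(i, 0, b) \<in> raw_cells (susp_pres ns) \<longleftrightarrow> i < length ns \<and> b \<noteq> Top"
  by (auto simp: raw_cells_def susp_pres_def globe_cell_def)

lemma susp_raw_eq[simp]: "susp_raw (i, k, b) = (i, Suc k, b)"
  by (simp add: susp_raw_def)

lemma susp_raw_inj: "susp_raw c = susp_raw d \<Longrightarrow> c = d"
  by (cases c; cases d) simp

lemma susp_el_cls:
  assumes gp: "glob_pres ns ms" and c: "c \<in> raw_cells ns"
  shows "susp_el ns ms (cls ns ms c) = cls (susp_pres ns) (susp_pres ms) (susp_raw c)"
proof -
  have cs: "can (susp_pres ms) (susp_raw d) = susp_raw (can ms d)" for d
    by (cases d) (simp add: susp_pres_def can_susp)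
  have rs: "susp_raw d \<in> raw_cells (susp_pres ns) \<longleftrightarrow> d \<in> raw_cells ns" for d
    by (cases d) (simp add: raw_susp_Suc)
  show ?thesis
    unfolding susp_el_def cell_equiv_can cls_def
    using c by (auto simp: cs rs) (metis prod_cases3)
qed

theorem mainTheorem5:
  assumes gp: "glob_pres ns ms"
  shows "final_poset_functor
           (gcells ns ms) (el_le ns ms)
           (gcells (susp_pres ns) (susp_pres ms)) (el_le (susp_pres ns) (susp_pres ms))
           (susp_el ns ms)"
  unfolding final_poset_functor_def
proof
  let ?ns = "susp_pres ns" and ?ms = "susp_pres ms"
  fix y assume yg: "y \<in> gcells ?ns ?ms"
  then obtain d where d: "d \<in> raw_cells ?ns" "y = cls ?ns ?ms d" by (auto simp: gcells_cls)
  obtain j k' b where dd: "d = (j, k', b)" by (cases d) auto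
  have lens: "length ns = Suc (length ms)" using gp by (simp add: glob_pres_def)
  have Fx: "susp_el ns ms x = cls ?ns ?ms (i, Suc k, b2)" "susp_el ns ms x \<in> gcells ?ns ?ms"
    if "x = cls ns ms (i, k, b2)" "(i, k, b2) \<in> raw_cells ns" for x i k b2
    using that susp_el_cls[OF gp that(2)] raw_susp_Suc[of i k b2 ns] by (auto simp: gcells_cls)
  show "weakly_contractible_poset {x \<in> gcells ns ms. el_le ?ns ?ms y (susp_el ns ms x)} (el_le ns ms)"
  proof (cases k')
    case 0
    have jb: "j < length ns" "b \<noteq> Top" using d(1) dd 0 raw_susp_0 by auto
    have "el_le ?ns ?ms y (susp_el ns ms x)" if xg: "x \<in> gcells ns ms" for x
    proof -
      obtain i k b2 where c: "(i, k, b2) \<in> raw_cells ns" "x = cls ns ms (i, k, b2)"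
        using xg by (auto simp: gcells_cls)
      have i: "i < length ns" using c(1) by (simp add: raw_cells_def)
      have "(i, 0, b) \<in> y"
        using d dd 0 jb i lens raw_susp_0[of i b ns]
        by (simp add: mem_cls susp_pres_def can_zero)
      moreover have "(i, Suc k, b2) \<in> susp_el ns ms x"
        using Fx(1)[OF c(2,1)] c(1) by (simp add: mem_cls raw_susp_Suc)
      ultimately have "fs ?ns ?ms y (susp_el ns ms x)"
        using face_stepI[OF yg Fx(2)[OF c(2,1)]] by blast
      then show ?thesis using yg Fx(2)[OF c(2,1)] by (simp add: el_le_iff)
    qed
    then have "{x \<in> gcells ns ms. el_le ?ns ?ms y (susp_el ns ms x)} = gcells ns ms" by blast
    then show ?thesis using gcells_contractible[OF gp] by simp
  next
    case (Suc k)
    let ?C = "{x \<in> gcells ns ms. el_le ?ns ?ms y (susp_el ns ms x)}"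
    have r0: "(j, k, b) \<in> raw_cells ns" using d(1) dd Suc raw_susp_Suc by simp
    let ?x0 = "cls ns ms (j, k, b)"
    have x0g: "?x0 \<in> gcells ns ms" using r0 by (simp add: gcells_cls)
    have Fx0: "susp_el ns ms ?x0 = y" using Fx(1)[OF refl r0] d dd Suc by simp
    have x0C: "?x0 \<in> ?C" using x0g Fx0 el_refl[OF yg] by simp
    have below: "el_le ns ms ?x0 x" if xC: "x \<in> ?C" for x
    proof -
      have xg: "x \<in> gcells ns ms" and le: "el_le ?ns ?ms y (susp_el ns ms x)" using xC by auto
      obtain i k2 b2 where c: "(i, k2, b2) \<in> raw_cells ns" "x = cls ns ms (i, k2, b2)"
        using xg by (auto simp: gcells_cls)
      have F: "susp_el ns ms x = cls ?ns ?ms (i, Suc k2, b2)" using Fx(1)[OF c(2,1)] .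
      have dy: "(j, Suc k, b) \<in> y" using d dd Suc cls_mem by simp
      have cs: "can ?ms (a, Suc kk, bb) = susp_raw (can ms (a, kk, bb))" for a kk bb
        by (simp add: susp_pres_def can_susp)
      have "y = susp_el ns ms x \<or> fs ?ns ?ms y (susp_el ns ms x)" using le by (simp add: el_le_iff)
      then show ?thesis
      proof
        assume "y = susp_el ns ms x"
        then have "(j, Suc k, b) \<in> cls ?ns ?ms (i, Suc k2, b2)" using dy F by simp
        then have "can ms (j, k, b) = can ms (i, k2, b2)"
          by (simp add: mem_cls cs) (metis susp_raw_inj)
        then have "?x0 = x" using c(2) by (simp add: cls_def)
        then show ?thesis using el_refl[OF xg] by simp
      next
        assume fsy: "fs ?ns ?ms y (susp_el ns ms x)"
        have "(i, Suc k2, b2) \<in> susp_el ns ms x" using F c(1) by (simp add: mem_cls raw_susp_Suc)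
        from fs_any[OF fsy this] obtain l e where le2: "l < Suc k2" "(i, l, e) \<in> y" by blast
        have "l = Suc k" using gcells_dim[OF yg le2(2) dy] .
        then have ie: "(i, Suc k, e) \<in> cls ?ns ?ms (j, Suc k, b)" using le2(2) d dd Suc by simp
        then have "(i, k, e) \<in> raw_cells ns" "can ms (i, k, e) = can ms (j, k, b)"
          by (auto simp: mem_cls cs raw_susp_Suc dest: susp_raw_inj)
        then have "(i, k, e) \<in> ?x0" by (simp add: mem_cls)
        moreover have "(i, k2, b2) \<in> x" using c cls_mem by simp
        moreover have "k < k2" using le2(1) \<open>l = Suc k\<close> by simp
        ultimately have "fs ns ms ?x0 x" using face_stepI[OF x0g xg] by blast
        then show ?thesis using x0g xg by (simp add: el_le_iff)
      qed
    qed
    show ?thesis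
    proof (rule dism_contractible)
      show "finite ?C" using finite_gcells[of ns ms] by simp
      show "\<forall>x\<in>?C. el_le ns ms x x" using el_refl by blast
      show "dism (el_le ns ms) ?C"
        by (rule dism_cone[of _ ?x0]) (use finite_gcells[of ns ms] x0C below in \<open>auto simp: cmp_def\<close>)
    qed
  qed
qed


end
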